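(* Let $(\Lambda,m_\Lambda)$ be a separated set with multiplicity and finite height, and let $(\Gamma,m_\Gamma)\in W_{\mathbb{Z}}(\Lambda,m_\Lambda)$. Then $D^-(\Gamma,m_\Gamma)\ge D^-(\Lambda,m_\Lambda)$.
   Context: A set with multiplicity is a pair $(\Lambda,m_\Lambda)$, $\Lambda\subseteq\mathbb{R}$, $m_\Lambda:\Lambda\to\mathbb{N}$; height $N=\sup m_\Lambda$; separated means $\inf\{|\lambda-\lambda'|:\lambda\ne\lambda'\}>0$. Let $\Lambda^j=\{\lambda:m_\Lambda(\lambda)\ge j\}$, $j=1,\dots,N$. A sequence of sets $\Lambda_n$ converges weakly to $\Lambda'$ if for every bounded open interval $(a,b)$ and $\varepsilon>0$, for all large $n$: $\Lambda_n\cap(a,b)\subseteq\Lambda'+(-\varepsilon,\varepsilon)$ and $\Lambda'\cap(a,b)\subseteq\Lambda_n+(-\varepsilon,\varepsilon)$. $(\Gamma,m_\Gamma)\in W_{\mathbb{Z}}(\Lambda,m_\Lambda)$ means: there are sets $\Gamma^1,\dots,\Gamma^N$ and a sequence $(k_n)\subseteq\mathbb{Z}$ such that $\Lambda^j+k_n$ converges weakly to $\Gamma^j$ for every $j$, and $\Gamma:=\Gamma^1$, $m_\Gamma(\gamma):=\max\{j:\gamma\in\Gamma^j\}$. $D^-(\Lambda,m_\Lambda)=\liminf_{r\to\infty}\inf_{x\in\mathbb{R}}\frac{1}{2r}\sum_{\lambda\in\Lambda\cap[x-r,x+r]}m_\Lambda(\lambda)$. *)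

theory Defs
  imports "HOL-Analysis.Analysis"
begin

definition mult_set :: "real set \<Rightarrow> (real \<Rightarrow> nat) \<Rightarrow> bool" where
  "mult_set L m \<longleftrightarrow> (\<forall>l\<in>L. 1 \<le> m l)"

definition separated :: "real set \<Rightarrow> bool" where
  "separated L \<longleftrightarrow> (\<exists>\<delta>>0. \<forall>l\<in>L. \<forall>l'\<in>L. l \<noteq> l' \<longrightarrow> \<delta> \<le> \<bar>l - l'\<bar>)"

definition finite_height :: "real set \<Rightarrow> (real \<Rightarrow> nat) \<Rightarrow> bool" where
  "finite_height L m \<longleftrightarrow> bdd_above (m ` L)"

definition level :: "real set \<Rightarrow> (real \<Rightarrow> nat) \<Rightarrow> nat \<Rightarrow> real set" where
  "level L m j = {l \<in> L. j \<le> m l}"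

definition weak_conv :: "(nat \<Rightarrow> real set) \<Rightarrow> real set \<Rightarrow> bool" where
  "weak_conv Ls L' \<longleftrightarrow>
     (\<forall>a b \<epsilon>. \<epsilon> > 0 \<longrightarrow>
        (\<forall>\<^sub>F n in sequentially.
           (\<forall>x \<in> Ls n \<inter> {a<..<b}. \<exists>y\<in>L'. \<bar>x - y\<bar> < \<epsilon>) \<and>
           (\<forall>y \<in> L' \<inter> {a<..<b}. \<exists>x\<in>Ls n. \<bar>x - y\<bar> < \<epsilon>)))"

definition W_Z :: "real set \<Rightarrow> (real \<Rightarrow> nat) \<Rightarrow> (real set \<times> (real \<Rightarrow> nat)) set" where
  "W_Z L m = {(G, mG). \<exists>Gs :: nat \<Rightarrow> real set. \<exists>k :: nat \<Rightarrow> int.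
      (\<forall>j\<ge>1. weak_conv (\<lambda>n. (\<lambda>l. l + real_of_int (k n)) ` level L m j) (Gs j)) \<and>
      G = Gs 1 \<and>
      (\<forall>g\<in>G. mG g = Max {j. 1 \<le> j \<and> g \<in> Gs j})}"

definition lower_density :: "real set \<Rightarrow> (real \<Rightarrow> nat) \<Rightarrow> ereal" where
  "lower_density L m = Liminf at_top (\<lambda>r::real.
      INF x::real. ereal ((\<Sum>l\<in>L \<inter> {x - r..x + r}. real (m l)) / (2 * r)))"

end

theory Submission
  imports Defs
begin

lemma wc1:
  assumes "weak_conv Ls L'" "\<epsilon> > 0"
  shows "\<forall>\<^sub>F n in sequentially. (\<forall>x \<in> Ls n \<inter> {a<..<b}. \<exists>y\<in>L'. \<bar>x - y\<bar> < \<epsilon>)"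
proof -
  from assms have "\<forall>\<^sub>F n in sequentially.
           (\<forall>x \<in> Ls n \<inter> {a<..<b}. \<exists>y\<in>L'. \<bar>x - y\<bar> < \<epsilon>) \<and>
           (\<forall>y \<in> L' \<inter> {a<..<b}. \<exists>x\<in>Ls n. \<bar>x - y\<bar> < \<epsilon>)"
    unfolding weak_conv_def by blast
  then show ?thesis by (rule eventually_mono) (rule conjunct1)
qed

lemma wc2:
  assumes "weak_conv Ls L'" "\<epsilon> > 0"
  shows "\<forall>\<^sub>F n in sequentially. (\<forall>y \<in> L' \<inter> {a<..<b}. \<exists>x\<in>Ls n. \<bar>x - y\<bar> < \<epsilon>)"
proof -
  from assms have "\<forall>\<^sub>F n in sequentially.
           (\<forall>x \<in> Ls n \<inter> {a<..<b}. \<exists>y\<in>L'. \<bar>x - y\<bar> < \<epsilon>) \<and>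
           (\<forall>y \<in> L' \<inter> {a<..<b}. \<exists>x\<in>Ls n. \<bar>x - y\<bar> < \<epsilon>)"
    unfolding weak_conv_def by blast
  then show ?thesis by (rule eventually_mono) (rule conjunct2)
qed

lemma ev_ex: "eventually P sequentially \<Longrightarrow> \<exists>n. P n"
  by (auto simp: eventually_sequentially)

lemma tri3:
  fixes a b g1 g2 e :: real
  assumes "\<bar>a - g1\<bar> < e" "\<bar>b - g2\<bar> < e"
  shows "\<bar>a - b\<bar> < \<bar>g1 - g2\<bar> + 2 * e"
  using assms by (simp add: abs_less_iff abs_le_iff abs_if split: if_splits)

lemma tri3':
  fixes a b g1 g2 e :: real
  assumes "\<bar>a - g1\<bar> < e" "\<bar>b - g2\<bar> < e"
  shows "\<bar>g1 - g2\<bar> < \<bar>a - b\<bar> + 2 * e"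
  using assms by (simp add: abs_less_iff abs_le_iff abs_if split: if_splits)

lemma sep_finite:
  fixes S :: "real set"
  assumes "\<delta> > 0" and "\<forall>l\<in>S. \<forall>l'\<in>S. l \<noteq> l' \<longrightarrow> \<delta> \<le> \<bar>l - l'\<bar>"
  shows "finite (S \<inter> {a..b})"
proof -
  have inj: "inj_on (\<lambda>l. \<lfloor>l / \<delta>\<rfloor>) (S \<inter> {a..b})"
  proof (rule inj_onI)
    fix x y assume x: "x \<in> S \<inter> {a..b}" and y: "y \<in> S \<inter> {a..b}"
      and e: "\<lfloor>x / \<delta>\<rfloor> = \<lfloor>y / \<delta>\<rfloor>"
    have "\<bar>x / \<delta> - y / \<delta>\<bar> < 1" using e by linarith
    then have "\<bar>x - y\<bar> / \<delta> < 1" using assms(1) by (simp add: diff_divide_distrib[symmetric])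
    then have "\<bar>x - y\<bar> < \<delta>" using assms(1) by (simp add: divide_less_eq)
    then show "x = y" using assms(2) x y by force
  qed
  have "(\<lambda>l. \<lfloor>l / \<delta>\<rfloor>) ` (S \<inter> {a..b}) \<subseteq> {\<lfloor>a / \<delta>\<rfloor>..\<lfloor>b / \<delta>\<rfloor>}"
    using assms(1) by (auto intro!: floor_mono divide_right_mono)
  then have "finite ((\<lambda>l. \<lfloor>l / \<delta>\<rfloor>) ` (S \<inter> {a..b}))"
    using finite_subset by blast
  then show ?thesis using inj finite_imageD by blast
qed

lemma weak_conv_empty:
  assumes "weak_conv (\<lambda>n. {}) H" shows "H = {}"
proof (rule ccontr)
  assume "H \<noteq> {}" then obtain y where y: "y \<in> H" by auto
  from assms have "\<forall>\<^sub>F n in sequentially. (\<forall>y' \<in> H \<inter> {y-1<..<y+1}. \<exists>x\<in>({}::real set). \<bar>x - y'\<bar> < 1)"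
    by (rule wc2) simp
  then obtain n where "\<forall>y' \<in> H \<inter> {y-1<..<y+1}. \<exists>x\<in>({}::real set). \<bar>x - y'\<bar> < 1"
    by (blast dest: ev_ex)
  moreover have "y \<in> H \<inter> {y-1<..<y+1}" using y by auto
  ultimately show False by blast
qed

lemma G_sep:
  fixes S G :: "real set" and c :: "nat \<Rightarrow> real"
  assumes dpos: "\<delta> > 0" and sepS: "\<forall>l\<in>S. \<forall>l'\<in>S. l \<noteq> l' \<longrightarrow> \<delta> \<le> \<bar>l - l'\<bar>"
    and wc: "weak_conv (\<lambda>n. (\<lambda>l. l + c n) ` S) G"
  shows "\<forall>g1\<in>G. \<forall>g2\<in>G. g1 \<noteq> g2 \<longrightarrow> \<delta> \<le> \<bar>g1 - g2\<bar>"
proof (intro ballI impI)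
  fix g1 g2 assume g1: "g1 \<in> G" and g2: "g2 \<in> G" and ne: "g1 \<noteq> g2"
  show "\<delta> \<le> \<bar>g1 - g2\<bar>"
  proof (rule ccontr)
    assume "\<not> \<delta> \<le> \<bar>g1 - g2\<bar>"
    define d where "d = \<bar>g1 - g2\<bar>"
    have dl: "d < \<delta>" and dp: "d > 0" using \<open>\<not> \<delta> \<le> \<bar>g1 - g2\<bar>\<close> ne unfolding d_def by auto
    define e where "e = min d (\<delta> - d) / 3"
    have ep: "e > 0" using dl dp unfolding e_def by auto
    define a where "a = min g1 g2 - 1"
    define b where "b = max g1 g2 + 1"
    from wc ep have "\<forall>\<^sub>F n in sequentially. (\<forall>y \<in> G \<inter> {a<..<b}. \<exists>x\<in>(\<lambda>l. l + c n) ` S. \<bar>x - y\<bar> < e)"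
      by (rule wc2)
    then obtain n where n: "\<forall>y \<in> G \<inter> {a<..<b}. \<exists>x\<in>(\<lambda>l. l + c n) ` S. \<bar>x - y\<bar> < e"
      by (blast dest: ev_ex)
    have "g1 \<in> G \<inter> {a<..<b}" "g2 \<in> G \<inter> {a<..<b}" using g1 g2 unfolding a_def b_def by auto
    then obtain l1 l2 where l1: "l1 \<in> S" "\<bar>l1 + c n - g1\<bar> < e" and l2: "l2 \<in> S" "\<bar>l2 + c n - g2\<bar> < e"
      using n by blast
    have "\<bar>(l1 + c n) - (l2 + c n)\<bar> < d + 2 * e" using tri3[OF l1(2) l2(2)] unfolding d_def by simp
    moreover have "e \<le> (\<delta> - d) / 3" unfolding e_def by simp
    ultimately have "\<bar>l1 - l2\<bar> < \<delta>" using dl by simp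
    then have "l1 = l2" using sepS l1 l2 by force
    then have "\<bar>g1 - g2\<bar> < 0 + 2 * e" using tri3'[OF l1(2) l2(2)] by simp
    then have "d < 2 * e" unfolding d_def by simp
    moreover have "e \<le> d / 3" unfolding e_def by simp
    ultimately show False using dp by linarith
  qed
qed

lemma G_sub:
  fixes S T G H :: "real set" and c :: "nat \<Rightarrow> real"
  assumes dpos: "\<delta> > 0" and sepG: "\<forall>g1\<in>G. \<forall>g2\<in>G. g1 \<noteq> g2 \<longrightarrow> \<delta> \<le> \<bar>g1 - g2\<bar>"
    and TS: "T \<subseteq> S"
    and wcS: "weak_conv (\<lambda>n. (\<lambda>l. l + c n) ` S) G"
    and wcT: "weak_conv (\<lambda>n. (\<lambda>l. l + c n) ` T) H"
    and y: "y \<in> H"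
  shows "y \<in> G"
proof -
  have near: "\<exists>g\<in>G. \<bar>y - g\<bar> < 2 * e" if ep: "e > 0" "e < 1" for e
  proof -
    from wcS ep(1) have e1: "\<forall>\<^sub>F n in sequentially. (\<forall>x \<in> (\<lambda>l. l + c n) ` S \<inter> {y-1<..<y+1}. \<exists>g\<in>G. \<bar>x - g\<bar> < e)"
      by (rule wc1)
    from wcT ep(1) have e2: "\<forall>\<^sub>F n in sequentially. (\<forall>y' \<in> H \<inter> {y-1<..<y+1}. \<exists>x\<in>(\<lambda>l. l + c n) ` T. \<bar>x - y'\<bar> < e)"
      by (rule wc2)
    obtain n where n1: "\<forall>x \<in> (\<lambda>l. l + c n) ` S \<inter> {y-1<..<y+1}. \<exists>g\<in>G. \<bar>x - g\<bar> < e"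
      and n2: "\<forall>y' \<in> H \<inter> {y-1<..<y+1}. \<exists>x\<in>(\<lambda>l. l + c n) ` T. \<bar>x - y'\<bar> < e"
      using ev_ex[OF eventually_conj[OF e1 e2]] by blast
    have "y \<in> H \<inter> {y-1<..<y+1}" using y by auto
    then obtain x where x: "x \<in> (\<lambda>l. l + c n) ` T" "\<bar>x - y\<bar> < e" using n2 by blast
    have "x \<in> (\<lambda>l. l + c n) ` S \<inter> {y-1<..<y+1}" using x TS ep by auto
    then obtain g where "g \<in> G" "\<bar>x - g\<bar> < e" using n1 by blast
    then show ?thesis using x by (intro bexI[of _ g]) auto
  qed
  define e1 where "e1 = min (\<delta> / 4) (1/2)"
  have e1p: "e1 > 0" "e1 < 1" using dpos unfolding e1_def by auto
  obtain g1 where g1: "g1 \<in> G" "\<bar>y - g1\<bar> < 2 * e1" using near[OF e1p] by blast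
  have "y = g1"
  proof (rule ccontr)
    assume "y \<noteq> g1"
    define d where "d = \<bar>y - g1\<bar>"
    have dp: "d > 0" using \<open>y \<noteq> g1\<close> unfolding d_def by auto
    define e where "e = min e1 (d/2)"
    have ep: "e > 0" "e < 1" using dp e1p unfolding e_def by auto
    obtain g where g: "g \<in> G" "\<bar>y - g\<bar> < 2 * e" using near[OF ep] by blast
    have "\<bar>g - g1\<bar> < \<delta>" using g g1 unfolding e_def e1_def by linarith
    then have "g = g1" using sepG g g1 by force
    moreover have "e \<le> d / 2" unfolding e_def by simp
    ultimately show False using g unfolding d_def by simp
  qed
  then show ?thesis using g1 by simp
qed

lemma card_level:
  fixes S H :: "real set" and c :: "nat \<Rightarrow> real"
  assumes sepS: "\<forall>l\<in>S. \<forall>l'\<in>S. l \<noteq> l' \<longrightarrow> \<delta> \<le> \<bar>l - l'\<bar>"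
    and wc: "weak_conv (\<lambda>n. (\<lambda>l. l + c n) ` S) H"
    and ep: "\<epsilon> > 0" "2 * \<epsilon> < \<delta>"
    and fin: "finite (H \<inter> {x - r..x + r})"
  shows "\<forall>\<^sub>F n in sequentially. card (S \<inter> {(x - c n) - (r - \<epsilon>)..(x - c n) + (r - \<epsilon>)}) \<le> card (H \<inter> {x - r..x + r})"
proof -
  from wc ep(1) have "\<forall>\<^sub>F n in sequentially. (\<forall>z \<in> (\<lambda>l. l + c n) ` S \<inter> {x-r-1<..<x+r+1}. \<exists>y\<in>H. \<bar>z - y\<bar> < \<epsilon>)"
    by (rule wc1)
  then show ?thesis
  proof (rule eventually_mono)
    fix n assume n: "\<forall>z \<in> (\<lambda>l. l + c n) ` S \<inter> {x-r-1<..<x+r+1}. \<exists>y\<in>H. \<bar>z - y\<bar> < \<epsilon>"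
    define A where "A = S \<inter> {(x - c n) - (r - \<epsilon>)..(x - c n) + (r - \<epsilon>)}"
    define f where "f l = (SOME y. y \<in> H \<and> \<bar>l + c n - y\<bar> < \<epsilon>)" for l
    have fl: "f l \<in> H \<and> \<bar>l + c n - f l\<bar> < \<epsilon>" if "l \<in> A" for l
    proof -
      have "l + c n \<in> (\<lambda>l. l + c n) ` S \<inter> {x-r-1<..<x+r+1}" using that ep unfolding A_def by auto
      then have "\<exists>y. y \<in> H \<and> \<bar>l + c n - y\<bar> < \<epsilon>" using n by blast
      then show ?thesis unfolding f_def by (rule someI_ex)
    qed
    have "inj_on f A"
    proof (rule inj_onI)
      fix l1 l2 assume l1: "l1 \<in> A" and l2: "l2 \<in> A" and e: "f l1 = f l2"
      have "\<bar>l1 - l2\<bar> < \<delta>" using fl[OF l1] fl[OF l2] e ep by linarith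
      then show "l1 = l2" using sepS l1 l2 unfolding A_def by force
    qed
    moreover have "f ` A \<subseteq> H \<inter> {x - r..x + r}"
    proof
      fix y assume "y \<in> f ` A"
      then obtain l where l: "l \<in> A" "y = f l" by auto
      have "l \<in> {(x - c n) - (r - \<epsilon>)..(x - c n) + (r - \<epsilon>)}" using l unfolding A_def by auto
      then show "y \<in> H \<inter> {x - r..x + r}" using fl[OF l(1)] l(2) by auto
    qed
    ultimately show "card A \<le> card (H \<inter> {x - r..x + r})"
      using card_inj_on_le fin by blast
  qed
qed

lemma card_filter_sum:
  assumes "finite A" shows "card {x\<in>A. P x} = (\<Sum>x\<in>A. if P x then 1 else (0::nat))"
  unfolding card_eq_sum[of "{x\<in>A. P x}"] by (rule sum.inter_filter[OF assms])

theorem lemma3p3: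
  fixes L G :: "real set" and m mG :: "real \<Rightarrow> nat"
  assumes "mult_set L m" and "separated L" and "finite_height L m"
    and "(G, mG) \<in> W_Z L m"
  shows "lower_density G mG \<ge> lower_density L m"
proof -
  obtain Gs k where wc0: "\<forall>j\<ge>1. weak_conv (\<lambda>n. (\<lambda>l. l + real_of_int (k n)) ` level L m j) (Gs j)"
    and G1: "G = Gs 1" and mGd: "\<forall>g\<in>G. mG g = Max {j. 1 \<le> j \<and> g \<in> Gs j}"
    using assms(4) unfolding W_Z_def by blast
  obtain \<delta> where dpos: "\<delta> > 0" and sepL: "\<forall>l\<in>L. \<forall>l'\<in>L. l \<noteq> l' \<longrightarrow> \<delta> \<le> \<bar>l - l'\<bar>"
    using assms(2) unfolding separated_def by blast
  obtain N where bound: "\<forall>l\<in>L. m l \<le> N"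
    using assms(3) unfolding finite_height_def bdd_above_def by auto
  define c where "c n = real_of_int (k n)" for n
  have wc: "\<forall>j\<ge>1. weak_conv (\<lambda>n. (\<lambda>l. l + c n) ` level L m j) (Gs j)"
    using wc0 unfolding c_def by simp
  have lev1: "level L m 1 = L" using assms(1) unfolding mult_set_def level_def by auto
  have levsub: "level L m j \<subseteq> L" for j unfolding level_def by auto
  have wcL: "weak_conv (\<lambda>n. (\<lambda>l. l + c n) ` L) G" using wc G1 lev1 by (metis order_refl)
  have sepG: "\<forall>g1\<in>G. \<forall>g2\<in>G. g1 \<noteq> g2 \<longrightarrow> \<delta> \<le> \<bar>g1 - g2\<bar>"
    by (rule G_sep[OF dpos sepL wcL])
  have sepLev: "\<forall>l\<in>level L m j. \<forall>l'\<in>level L m j. l \<noteq> l' \<longrightarrow> \<delta> \<le> \<bar>l - l'\<bar>" for j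
    using sepL levsub by blast
  have Gsub: "Gs j \<subseteq> G" if "j \<ge> 1" for j
  proof
    fix y assume "y \<in> Gs j"
    then show "y \<in> G" using G_sub[OF dpos sepG levsub wcL] wc that by blast
  qed
  have Gempty: "Gs j = {}" if "j > N" for j
  proof -
    have "level L m j = {}" using bound that unfolding level_def by force
    moreover have "j \<ge> 1" using that by simp
    then have "weak_conv (\<lambda>n. (\<lambda>l. l + c n) ` level L m j) (Gs j)" using wc by blast
    ultimately have "weak_conv (\<lambda>n. {}) (Gs j)" by simp
    then show ?thesis by (rule weak_conv_empty)
  qed
  have finG: "finite (G \<inter> {a..b})" for a b by (rule sep_finite[OF dpos sepG])
  have finL: "finite (L \<inter> {a..b})" for a b by (rule sep_finite[OF dpos sepL])
  define \<epsilon>0 where "\<epsilon>0 = \<delta> / 3"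
  have e0: "\<epsilon>0 > 0" "2 * \<epsilon>0 < \<delta>" using dpos unfolding \<epsilon>0_def by auto
  have count: "\<exists>z. (\<Sum>l\<in>L \<inter> {z - (r - \<epsilon>0)..z + (r - \<epsilon>0)}. real (m l))
      \<le> (\<Sum>g\<in>G \<inter> {x - r..x + r}. real (mG g))" for x r
  proof -
    have "\<forall>\<^sub>F n in sequentially. \<forall>j\<in>{1..N}. card (level L m j \<inter> {(x - c n) - (r - \<epsilon>0)..(x - c n) + (r - \<epsilon>0)}) \<le> card (Gs j \<inter> {x - r..x + r})"
    proof (rule eventually_ball_finite)
      show "finite {1..N}" by simp
      show "\<forall>j\<in>{1..N}. \<forall>\<^sub>F n in sequentially. card (level L m j \<inter> {(x - c n) - (r - \<epsilon>0)..(x - c n) + (r - \<epsilon>0)}) \<le> card (Gs j \<inter> {x - r..x + r})"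
      proof
        fix j assume j: "j \<in> {1..N}"
        have fin: "finite (Gs j \<inter> {x - r..x + r})"
        proof -
          have "Gs j \<inter> {x - r..x + r} \<subseteq> G \<inter> {x - r..x + r}" using Gsub j by auto
          then show ?thesis using finite_subset finG by blast
        qed
        show "\<forall>\<^sub>F n in sequentially. card (level L m j \<inter> {(x - c n) - (r - \<epsilon>0)..(x - c n) + (r - \<epsilon>0)}) \<le> card (Gs j \<inter> {x - r..x + r})"
          by (rule card_level[OF sepLev _ e0 fin]) (use wc j in auto)
      qed
    qed
    then obtain n where n: "\<forall>j\<in>{1..N}. card (level L m j \<inter> {(x - c n) - (r - \<epsilon>0)..(x - c n) + (r - \<epsilon>0)}) \<le> card (Gs j \<inter> {x - r..x + r})"
      by (blast dest: ev_ex)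
    define z where "z = x - c n"
    define A where "A = L \<inter> {z - (r - \<epsilon>0)..z + (r - \<epsilon>0)}"
    define B where "B = G \<inter> {x - r..x + r}"
    have fA: "finite A" unfolding A_def by (rule finL)
    have fB: "finite B" unfolding B_def by (rule finG)
    have mA: "m l = (\<Sum>j\<in>{1..N}. if j \<le> m l then 1 else 0)" if "l \<in> A" for l
    proof -
      have "{j\<in>{1..N}. j \<le> m l} = {1..m l}" using bound that unfolding A_def by auto
      then have "m l = card {j\<in>{1..N}. j \<le> m l}" by simp
      moreover have "card {j\<in>{1..N}. j \<le> m l} = (\<Sum>j\<in>{1..N}. if j \<le> m l then 1 else 0)"
        by (rule card_filter_sum) simp
      ultimately show ?thesis by simp
    qed
    have "(\<Sum>l\<in>A. m l) = (\<Sum>l\<in>A. \<Sum>j\<in>{1..N}. if j \<le> m l then 1 else 0)"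
      using mA by (rule sum.cong[OF refl])
    also have "\<dots> = (\<Sum>j\<in>{1..N}. \<Sum>l\<in>A. if j \<le> m l then 1 else 0)" by (rule sum.swap)
    also have "\<dots> = (\<Sum>j\<in>{1..N}. card {l\<in>A. j \<le> m l})"
      using fA by (simp add: card_filter_sum)
    also have "\<dots> = (\<Sum>j\<in>{1..N}. card (level L m j \<inter> {z - (r - \<epsilon>0)..z + (r - \<epsilon>0)}))"
    proof (rule sum.cong[OF refl])
      fix j have "{l\<in>A. j \<le> m l} = level L m j \<inter> {z - (r - \<epsilon>0)..z + (r - \<epsilon>0)}"
        unfolding A_def level_def by auto
      then show "card {l\<in>A. j \<le> m l} = card (level L m j \<inter> {z - (r - \<epsilon>0)..z + (r - \<epsilon>0)})" by simp
    qed
    also have "\<dots> \<le> (\<Sum>j\<in>{1..N}. card (Gs j \<inter> {x - r..x + r}))"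
      by (rule sum_mono) (use n in \<open>simp add: z_def\<close>)
    also have "\<dots> = (\<Sum>j\<in>{1..N}. card {g\<in>B. g \<in> Gs j})"
    proof (rule sum.cong[OF refl])
      fix j assume "j \<in> {1..N}"
      then have "Gs j \<inter> {x - r..x + r} = {g\<in>B. g \<in> Gs j}" using Gsub unfolding B_def by auto
      then show "card (Gs j \<inter> {x - r..x + r}) = card {g\<in>B. g \<in> Gs j}" by simp
    qed
    also have "\<dots> = (\<Sum>j\<in>{1..N}. \<Sum>g\<in>B. if g \<in> Gs j then 1 else 0)"
      using fB by (simp add: card_filter_sum)
    also have "\<dots> = (\<Sum>g\<in>B. \<Sum>j\<in>{1..N}. if g \<in> Gs j then 1 else 0)" by (rule sum.swap)
    also have "\<dots> = (\<Sum>g\<in>B. card {j\<in>{1..N}. g \<in> Gs j})"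
    proof (rule sum.cong[OF refl])
      fix g show "(\<Sum>j\<in>{1..N}. if g \<in> Gs j then 1 else 0) = card {j\<in>{1..N}. g \<in> Gs j}"
        by (rule card_filter_sum[symmetric]) simp
    qed
    also have "\<dots> \<le> (\<Sum>g\<in>B. mG g)"
    proof (rule sum_mono)
      fix g assume gB: "g \<in> B"
      then have gG: "g \<in> G" unfolding B_def by auto
      define Sg where "Sg = {j. 1 \<le> j \<and> g \<in> Gs j}"
      have "Sg \<subseteq> {1..N}" unfolding Sg_def by (auto) (metis Gempty empty_iff not_le)
      then have fS: "finite Sg" using finite_subset by blast
      have eq: "{j\<in>{1..N}. g \<in> Gs j} = Sg" using \<open>Sg \<subseteq> {1..N}\<close> unfolding Sg_def by auto
      have "Sg \<subseteq> {1..Max Sg}" using fS unfolding Sg_def by auto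
      then have "card Sg \<le> card {1..Max Sg}" by (rule card_mono[rotated]) simp
      then have "card Sg \<le> Max Sg" by simp
      then show "card {j\<in>{1..N}. g \<in> Gs j} \<le> mG g" using eq mGd gG unfolding Sg_def by simp
    qed
    finally have "(\<Sum>l\<in>A. m l) \<le> (\<Sum>g\<in>B. mG g)" .
    then have "real (\<Sum>l\<in>A. m l) \<le> real (\<Sum>g\<in>B. mG g)" by linarith
    then have "(\<Sum>l\<in>A. real (m l)) \<le> (\<Sum>g\<in>B. real (mG g))" by simp
    then show ?thesis unfolding A_def B_def by blast
  qed
  define fL where "fL r = (INF x::real. ereal ((\<Sum>l\<in>L \<inter> {x - r..x + r}. real (m l)) / (2 * r)))" for r
  define fG where "fG r = (INF x::real. ereal ((\<Sum>g\<in>G \<inter> {x - r..x + r}. real (mG g)) / (2 * r)))" for r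
  have fGnn: "0 \<le> fG r" if "r \<ge> 0" for r
    unfolding fG_def using that by (intro INF_greatest) (auto intro!: sum_nonneg divide_nonneg_nonneg)
  have "Liminf at_top fL \<le> Liminf at_top fG"
  proof (rule iffD2[OF le_Liminf_iff], intro allI impI)
    fix y assume y: "y < Liminf at_top fL"
    show "\<forall>\<^sub>F r in at_top. y < fG r"
    proof (cases "y < 0")
      case True
      show ?thesis unfolding eventually_at_top_linorder
        using True fGnn by (intro exI[of _ 0]) (auto intro: less_le_trans)
    next
      case False
      obtain b where yb: "y < ereal b" and bL: "ereal b < Liminf at_top fL" using ereal_dense2[OF y] by blast
      have "\<forall>\<^sub>F r in at_top. ereal b < fL r" using less_LiminfD[OF bL] .
      then obtain R where R: "\<forall>r\<ge>R. ereal b < fL r" unfolding eventually_at_top_linorder by blast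
      obtain a where ya: "y = ereal a" using False yb by (cases y) auto
      have a0: "a \<ge> 0" and ab: "a < b" using False yb ya by auto
      define R' where "R' = max (R + \<epsilon>0) (max (2 * \<epsilon>0) (b * \<epsilon>0 / (b - a) + 1))"
      show ?thesis unfolding eventually_at_top_linorder
      proof (intro exI[of _ R'] allI impI)
        fix r assume r: "r \<ge> R'"
        have r1: "r - \<epsilon>0 \<ge> R" and r2: "r \<ge> 2 * \<epsilon>0" and r3: "r \<ge> b * \<epsilon>0 / (b - a) + 1"
          using r unfolding R'_def by auto
        have rp: "r - \<epsilon>0 > 0" "r > 0" using r2 e0 by auto
        have bfl: "ereal b < fL (r - \<epsilon>0)" using R r1 by blast
        have fGb: "ereal (b * (r - \<epsilon>0) / r) \<le> fG r"
          unfolding fG_def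
        proof (rule INF_greatest)
          fix x :: real
          obtain z where z: "(\<Sum>l\<in>L \<inter> {z - (r - \<epsilon>0)..z + (r - \<epsilon>0)}. real (m l))
              \<le> (\<Sum>g\<in>G \<inter> {x - r..x + r}. real (mG g))" using count by blast
          have "fL (r - \<epsilon>0) \<le> ereal ((\<Sum>l\<in>L \<inter> {z - (r - \<epsilon>0)..z + (r - \<epsilon>0)}. real (m l)) / (2 * (r - \<epsilon>0)))"
            unfolding fL_def by (rule INF_lower) simp
          from less_le_trans[OF bfl this] have "b < (\<Sum>l\<in>L \<inter> {z - (r - \<epsilon>0)..z + (r - \<epsilon>0)}. real (m l)) / (2 * (r - \<epsilon>0))"
            by (simp only: ereal_less_eq(4) less_ereal.simps)
          then have "b * (2 * (r - \<epsilon>0)) < (\<Sum>l\<in>L \<inter> {z - (r - \<epsilon>0)..z + (r - \<epsilon>0)}. real (m l))"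
            using rp by (simp add: less_divide_eq)
          with z have "b * (2 * (r - \<epsilon>0)) < (\<Sum>g\<in>G \<inter> {x - r..x + r}. real (mG g))" by linarith
          then have "b * (r - \<epsilon>0) / r \<le> (\<Sum>g\<in>G \<inter> {x - r..x + r}. real (mG g)) / (2 * r)"
            using rp by (simp add: divide_simps) (simp add: algebra_simps)
          then show "ereal (b * (r - \<epsilon>0) / r) \<le> ereal ((\<Sum>g\<in>G \<inter> {x - r..x + r}. real (mG g)) / (2 * r))"
            by simp
        qed
        have ab2: "a < b * (r - \<epsilon>0) / r"
        proof -
          have "b * \<epsilon>0 / (b - a) < r" using r3 by linarith
          then have "b * \<epsilon>0 < r * (b - a)" using ab by (simp add: divide_less_eq mult.commute)
          then have "a * r < b * (r - \<epsilon>0)" by (simp add: algebra_simps)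
          then show ?thesis using rp by (simp add: less_divide_eq)
        qed
        have "ereal a < ereal (b * (r - \<epsilon>0) / r)" using ab2 by simp
        from less_le_trans[OF this fGb] show "y < fG r" using ya by simp
      qed
    qed
  qed
  then show ?thesis unfolding lower_density_def fL_def fG_def .
qed

end
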